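(* Let $g>0$, $0<\rho_0<\rho_+$, $f,\hat f\in\mathbb{R}$, $k>0$, $a>0$, $r_0>0$, and let $c\neq 0$ satisfy $k^2c^2>f^2$. Let $m>0$ be defined by $$m^2=\frac{k^4c^2}{k^2c^2-f^2},$$ and set $$b=\frac{ma}{k},\qquad d=-\frac{fma}{k^2c}$$ (so that $ma-kb=0$, $kcd+bf=0$, $mkc^2b+mcdf=k^2c^2a$ and $b^2=a^2+d^2$). Let $s^*>0$ satisfy $m^2a^2e^{-2ms^*}<1$, and let $s^*\le s_0<s_+$. For labels $(q,r,s)\in\mathbb{R}\times[-r_0,r_0]\times[s_0,s_+]$ and time $t$, put $\theta=k(q-ct)$ and define particle positions $$x=q-be^{-ms}\sin\theta,\qquad y=r-de^{-ms}\cos\theta,\qquad z=s-ae^{-ms}\cos\theta .$$ Then: (i) the Jacobian determinant of $(q,r,s)\mapsto(x,y,z)$ equals $1-m^2a^2e^{-2ms}$, which is independent of $t$ and nonzero, so the flow is volume preserving (incompressible); (ii) the velocity field $(u,v,w)=\frac{D}{Dt}(x,y,z)=(kcbe^{-ms}\cos\theta,\,-kcde^{-ms}\sin\theta,\,-kcae^{-ms}\sin\theta)$ together with the pressure $$P=\tilde P_0-\rho_0\Big[-\tfrac12k^2c^2b^2e^{-2ms}+\tfrac12\hat f kcab\,e^{-2ms}-\tfrac12 fkcbd\,e^{-2ms}+(ca\hat f-cdf-kc^2b-ag)e^{-ms}\cos\theta+gs\Big]$$ (for any constant $\tilde P_0$) satisfies the $f$-plane Euler equations $$\tfrac{Du}{Dt}+\hat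 f w-fv=-\tfrac{1}{\rho_0}P_x,\quad \tfrac{Dv}{Dt}+fu=-\tfrac{1}{\rho_0}P_y,\quad \tfrac{Dw}{Dt}-\hat f u=-\tfrac{1}{\rho_0}P_z-g$$ in the region $\{s_0\le s\le s_+\}$; (iii) if moreover the pressure-continuity condition $$\rho_+ga=\rho_0\big(kc^2b+cdf-ca\hat f+ag\big)$$ holds, then for every constant $P_0$ the constant $\tilde P_0$ can be chosen so that $P=P_0-\rho_+gz$ on the surface $s=s_0$ (the thermocline), which is a material surface (so the kinematic condition holds there); and in this case $c$ satisfies the dispersion relation $$c^2(c^2k^2-f^2)=(c\hat f+\tilde g)^2,\qquad \tilde g=\frac{g(\rho_+-\rho_0)}{\rho_0}.$$
   Context: Setting: a fluid layer of constant density $\rho_0$ (lying above a motionless abyssal layer of constant density $\rho_+>\rho_0$, in which the pressure is hydrostatic, $P=P_0-\rho_+gz$) is described in a rotating frame with $x,y,z$ pointing east (longitude), north (latitude) and locally vertical. In the $f$-plane approximation the Coriolis parameters $f=2\Omega\sin\phi$ and $\hat f=2\Omega\cos\phi$ ($\Omega$ Earth's rotation rate, $\phi$ a fixed latitude) are treated as constants, and $g$ is gravitational acceleration. The flow is described in Lagrangian form: $(q,r,s)$ are particle labels, $D/Dt$ is the material (Lagrangian time) derivative at fixed labels, and $P_x,P_y,P_z$ are Eulerian partial derivatives of the pressure. The surface $s=s_0$ is the thermocline $z=\eta(x,y,t)$ separating the moving layer from the still layer below; the dynamic condition there is $P=P_0-\rho_+gz$ and the kinematic condition is $w=\eta_t+u\eta_x+v\eta_y$.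 *)

theory Defs
  imports "HOL-Analysis.Analysis"
begin

definition phase :: "real \<Rightarrow> real \<Rightarrow> real \<Rightarrow> real \<Rightarrow> real" where
  "phase k c q t = k * (q - c * t)"

definition xpos :: "real \<Rightarrow> real \<Rightarrow> real \<Rightarrow> real \<Rightarrow> real \<Rightarrow> real \<Rightarrow> real \<Rightarrow> real \<Rightarrow> real" where
  "xpos b m k c q r s t = q - b * exp (- m * s) * sin (phase k c q t)"

definition ypos :: "real \<Rightarrow> real \<Rightarrow> real \<Rightarrow> real \<Rightarrow> real \<Rightarrow> real \<Rightarrow> real \<Rightarrow> real \<Rightarrow> real" where
  "ypos d m k c q r s t = r - d * exp (- m * s) * cos (phase k c q t)"

definition zpos :: "real \<Rightarrow> real \<Rightarrow> real \<Rightarrow> real \<Rightarrow> real \<Rightarrow> real \<Rightarrow> real \<Rightarrow> real \<Rightarrow> real" where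
  "zpos a m k c q r s t = s - a * exp (- m * s) * cos (phase k c q t)"

definition uvel :: "real \<Rightarrow> real \<Rightarrow> real \<Rightarrow> real \<Rightarrow> real \<Rightarrow> real \<Rightarrow> real \<Rightarrow> real \<Rightarrow> real" where
  "uvel b m k c q r s t = k * c * b * exp (- m * s) * cos (phase k c q t)"

definition vvel :: "real \<Rightarrow> real \<Rightarrow> real \<Rightarrow> real \<Rightarrow> real \<Rightarrow> real \<Rightarrow> real \<Rightarrow> real \<Rightarrow> real" where
  "vvel d m k c q r s t = - k * c * d * exp (- m * s) * sin (phase k c q t)"

definition wvel :: "real \<Rightarrow> real \<Rightarrow> real \<Rightarrow> real \<Rightarrow> real \<Rightarrow> real \<Rightarrow> real \<Rightarrow> real \<Rightarrow> real" where
  "wvel a m k c q r s t = - k * c * a * exp (- m * s) * sin (phase k c q t)"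

text \<open>The pressure, expressed in Lagrangian labels; \<open>P0t\<close> is the constant \<open>\<tilde>P_0\<close>.\<close>

definition pres ::
  "real \<Rightarrow> real \<Rightarrow> real \<Rightarrow> real \<Rightarrow> real \<Rightarrow> real \<Rightarrow> real \<Rightarrow> real \<Rightarrow> real \<Rightarrow> real \<Rightarrow> real \<Rightarrow> real
   \<Rightarrow> real \<Rightarrow> real \<Rightarrow> real \<Rightarrow> real" where
  "pres P0t rho0 g f fh k c a b d m q r s t =
     P0t - rho0 * ( - (1/2) * k^2 * c^2 * b^2 * exp (- 2 * m * s)
                    + (1/2) * fh * k * c * a * b * exp (- 2 * m * s)
                    - (1/2) * f * k * c * b * d * exp (- 2 * m * s)
                    + (c * a * fh - c * d * f - k * c^2 * b - a * g) * exp (- m * s) * cos (phase k c q t)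
                    + g * s)"

definition det3 :: "real \<Rightarrow> real \<Rightarrow> real \<Rightarrow> real \<Rightarrow> real \<Rightarrow> real \<Rightarrow> real \<Rightarrow> real \<Rightarrow> real \<Rightarrow> real" where
  "det3 a11 a12 a13 a21 a22 a23 a31 a32 a33 =
     a11 * (a22 * a33 - a23 * a32) - a12 * (a21 * a33 - a23 * a31) + a13 * (a21 * a32 - a22 * a31)"

end

theory Submission
  imports Defs
begin

lemma d_xq: "deriv (\<lambda>q'. xpos b m k c q' r s t) q = 1 - b * exp (-m * s) * cos (phase k c q t) * k"
  by (rule DERIV_imp_deriv) (unfold xpos_def phase_def, (rule derivative_eq_intros refl | simp)+)
lemma d_xr: "deriv (\<lambda>r'. xpos b m k c q r' s t) r = 0"
  unfolding xpos_def by simp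
lemma d_xs: "deriv (\<lambda>s'. xpos b m k c q r s' t) s = m * b * exp (-m * s) * sin (phase k c q t)"
  by (rule DERIV_imp_deriv) (unfold xpos_def phase_def, (rule derivative_eq_intros refl | simp)+)
lemma d_xt: "deriv (\<lambda>t'. xpos b m k c q r s t') t = uvel b m k c q r s t"
  unfolding uvel_def by (rule DERIV_imp_deriv) (unfold xpos_def phase_def, (rule derivative_eq_intros refl | simp)+)
lemma d_yq: "deriv (\<lambda>q'. ypos d m k c q' r s t) q = d * exp (-m * s) * sin (phase k c q t) * k"
  by (rule DERIV_imp_deriv) (unfold ypos_def phase_def, (rule derivative_eq_intros refl | simp)+)
lemma d_yr: "deriv (\<lambda>r'. ypos d m k c q r' s t) r = 1"
  by (rule DERIV_imp_deriv) (unfold ypos_def phase_def, (rule derivative_eq_intros refl | simp)+)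
lemma d_ys: "deriv (\<lambda>s'. ypos d m k c q r s' t) s = m * d * exp (-m * s) * cos (phase k c q t)"
  by (rule DERIV_imp_deriv) (unfold ypos_def phase_def, (rule derivative_eq_intros refl | simp)+)
lemma d_yt: "deriv (\<lambda>t'. ypos d m k c q r s t') t = vvel d m k c q r s t"
  unfolding vvel_def by (rule DERIV_imp_deriv) (unfold ypos_def phase_def, (rule derivative_eq_intros refl | simp)+)
lemma d_zq: "deriv (\<lambda>q'. zpos a m k c q' r s t) q = a * exp (-m * s) * sin (phase k c q t) * k"
  by (rule DERIV_imp_deriv) (unfold zpos_def phase_def, (rule derivative_eq_intros refl | simp)+)
lemma d_zr: "deriv (\<lambda>r'. zpos a m k c q r' s t) r = 0"
  unfolding zpos_def by simp
lemma d_zs: "deriv (\<lambda>s'. zpos a m k c q r s' t) s = 1 + m * a * exp (-m * s) * cos (phase k c q t)"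
  by (rule DERIV_imp_deriv) (unfold zpos_def phase_def, (rule derivative_eq_intros refl | simp)+)
lemma d_zt: "deriv (\<lambda>t'. zpos a m k c q r s t') t = wvel a m k c q r s t"
  unfolding wvel_def by (rule DERIV_imp_deriv) (unfold zpos_def phase_def, (rule derivative_eq_intros refl | simp)+)
lemma d_ut: "deriv (\<lambda>t'. uvel b m k c q r s t') t = k^2 * c^2 * b * exp (-m * s) * sin (phase k c q t)"
  by (rule DERIV_imp_deriv) (unfold uvel_def phase_def, (rule derivative_eq_intros refl | simp add: power2_eq_square)+)
lemma d_vt: "deriv (\<lambda>t'. vvel d m k c q r s t') t = k^2 * c^2 * d * exp (-m * s) * cos (phase k c q t)"
  by (rule DERIV_imp_deriv) (unfold vvel_def phase_def, (rule derivative_eq_intros refl | simp add: power2_eq_square)+)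
lemma d_wt: "deriv (\<lambda>t'. wvel a m k c q r s t') t = k^2 * c^2 * a * exp (-m * s) * cos (phase k c q t)"
  by (rule DERIV_imp_deriv) (unfold wvel_def phase_def, (rule derivative_eq_intros refl | simp add: power2_eq_square)+)
lemma d_Pq: "deriv (\<lambda>q'. pres P0t rho0 g f fh k c a b d m q' r s t) q
   = rho0 * (c  *  a  *  fh - c  *  d  *  f - k  *  c^2  *  b - a  *  g) * k * exp (-m * s) * sin (phase k c q t)"
  by (rule DERIV_imp_deriv) (unfold pres_def phase_def, (rule derivative_eq_intros refl | simp)+)
lemma d_Pr: "deriv (\<lambda>r'. pres P0t rho0 g f fh k c a b d m q r' s t) r = 0"
  unfolding pres_def by simp
lemma d_Ps: "deriv (\<lambda>s'. pres P0t rho0 g f fh k c a b d m q r s' t) s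
   = - rho0  *  ( - 2 * m * ( - (1/2)  *  k^2  *  c^2  *  b^2 + (1/2)  *  fh  *  k  *  c  *  a  *  b - (1/2)  *  f  *  k  *  c  *  b  *  d)  *  exp (- 2  *  m  *  s)
       - m * (c  *  a  *  fh - c  *  d  *  f - k  *  c^2  *  b - a  *  g)  *  exp (- m  *  s)  *  cos (phase k c q t) + g)"
  by (rule DERIV_imp_deriv) (unfold pres_def phase_def, (rule derivative_eq_intros refl | simp add: algebra_simps)+)

lemma ids:
  fixes f k c m a b d :: real
  assumes hk: "k > 0" and hc: "c \<noteq> 0" and hkc: "k^2 * c^2 > f^2"
    and hm: "m^2 = k^4 * c^2 / (k^2 * c^2 - f^2)"
    and hb: "b = m * a / k" and hd: "d = - (f * m * a / (k^2 * c))"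
  shows "k*b = m*a" "k*c*d + b*f = 0" "b^2 = a^2 + d^2" "m*k*c^2*b + m*c*d*f = k^2*c^2*a"
proof -
  have D: "k^2*c^2 - f^2 > 0" using hkc by simp
  have hm2: "m^2 * (k^2*c^2 - f^2) = k^4*c^2" using hm D by (simp add: field_simps)
  show kb: "k*b = m*a" using hb hk by simp
  have kd: "k^2*c*d = - f*m*a" using hd hk hc by (simp add: field_simps)
  show kcd: "k*c*d + b*f = 0"
  proof -
    have "k*(k*c*d + b*f) = 0" using kd kb by (simp add: algebra_simps power2_eq_square)
    then show ?thesis using hk by simp
  qed
  have "k^4*c^2*(b^2 - a^2 - d^2) = 0"
  proof -
    have "k^4*c^2*(b^2 - a^2 - d^2) = c^2*k^2*(k*b)^2 - k^4*c^2*a^2 - (k^2*c*d)^2"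
      by (simp add: algebra_simps power2_eq_square power4_eq_xxxx)
    also have "... = a^2*(m^2*(k^2*c^2 - f^2) - k^4*c^2)" unfolding kb kd by (simp add: algebra_simps power2_eq_square)
    also have "... = 0" using hm2 by simp
    finally show ?thesis .
  qed
  then show "b^2 = a^2 + d^2" using hk hc by simp
  have "k^2*(m*k*c^2*b + m*c*d*f - k^2*c^2*a) = 0"
  proof -
    have "k^2*(m*k*c^2*b + m*c*d*f - k^2*c^2*a) = m*k^2*c^2*(k*b) + m*f*(k^2*c*d) - k^4*c^2*a"
      by (simp add: algebra_simps power2_eq_square power4_eq_xxxx)
    also have "... = a*(m^2*(k^2*c^2 - f^2) - k^4*c^2)" unfolding kb kd by (simp add: algebra_simps power2_eq_square)
    also have "... = 0" using hm2 by simp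
    finally show ?thesis .
  qed
  then show "m*k*c^2*b + m*c*d*f = k^2*c^2*a" using hk by simp
qed

lemma jac:
  fixes a b d m k E S C :: real
  assumes kb: "k*b = m*a" and sc: "S^2 + C^2 = 1"
  shows "det3 (1 - b*E*C*k) 0 (m*b*E*S) (d*E*S*k) 1 (m*d*E*C) (a*E*S*k) 0 (1 + m*a*E*C) = 1 - m^2*a^2*E^2"
proof -
  have "det3 (1 - b*E*C*k) 0 (m*b*E*S) (d*E*S*k) 1 (m*d*E*C) (a*E*S*k) 0 (1 + m*a*E*C)
     = 1 + m*a*E*C - (k*b)*E*C - (k*b)*m*a*E^2*(S^2 + C^2)"
    unfolding det3_def by (simp add: algebra_simps power2_eq_square)
  also have "... = 1 - m^2*a^2*E^2" unfolding kb sc by (simp add: algebra_simps power2_eq_square)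
  finally show ?thesis .
qed

lemma ex_q:
  fixes a b d m k c f fh g rho0 E S C :: real
  assumes kb: "k*b = m*a" and kcd: "k*c*d + b*f = 0" and bb: "b^2 = a^2 + d^2"
  shows "rho0*(c * a * fh - c * d * f - k * c^2 * b - a * g)*k*E*S
     = (1 - b*E*C*k)*(-rho0*(k*c*E*S*(k*c*b - fh*a + f*d))) + (d*E*S*k)*0
       + (a*E*S*k)*(-rho0*(k^2*c^2*a*E*C - fh*k*c*b*E*C + g))"
proof -
  have "(1 - b*E*C*k)*(-rho0*(k*c*E*S*(k*c*b - fh*a + f*d))) + (d*E*S*k)*0
       + (a*E*S*k)*(-rho0*(k^2*c^2*a*E*C - fh*k*c*b*E*C + g))
     = rho0*(c * a * fh - c * d * f - k * c^2 * b - a * g)*k*E*S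
       + rho0*k*E^2*S*C*(k^2*c^2*(b^2 - a^2) + b*k*c*f*d)"
    by (simp add: algebra_simps power2_eq_square)
  also have "k^2*c^2*(b^2 - a^2) + b*k*c*f*d = k*c*d*(k*c*d + b*f)"
    using bb by (simp add: algebra_simps power2_eq_square)
  finally show ?thesis using kcd by simp
qed

lemma ex_s:
  fixes a b d m k c f fh g rho0 E S C :: real
  assumes kb: "k*b = m*a" and kcd: "k*c*d + b*f = 0" and bb: "b^2 = a^2 + d^2"
    and key: "m*k*c^2*b + m*c*d*f = k^2*c^2*a" and sc: "S^2 + C^2 = 1"
  shows "- rho0 * ( - 2*m*( - (1/2) * k^2 * c^2 * b^2 + (1/2) * fh * k * c * a * b - (1/2) * f * k * c * b * d) * E^2
       - m*(c * a * fh - c * d * f - k * c^2 * b - a * g) * E * C + g)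
     = (m*b*E*S)*(-rho0*(k*c*E*S*(k*c*b - fh*a + f*d))) + (m*d*E*C)*0
       + (1 + m*a*E*C)*(-rho0*(k^2*c^2*a*E*C - fh*k*c*b*E*C + g))"
using kb kcd bb key sc by algebra


theorem mainTheorem1:
  fixes g rho0 rhop f fh k a r0 c m b d sstar s0 sp :: real
  assumes hg: "g > 0" and hrho: "0 < rho0" "rho0 < rhop"
    and hk: "k > 0" and ha: "a > 0" and hr0: "r0 > 0"
    and hc: "c \<noteq> 0" and hkc: "k^2 * c^2 > f^2"
    and hm: "m > 0" "m^2 = k^4 * c^2 / (k^2 * c^2 - f^2)"
    and hb: "b = m * a / k" and hd: "d = - (f * m * a / (k^2 * c))"
    and hs: "sstar > 0" "m^2 * a^2 * exp (- 2 * m * sstar) < 1" "sstar \<le> s0" "s0 < sp"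
  shows
  \<comment> \<open>(i) Jacobian of the label-to-position map\<close>
  "(\<forall>q r s t. r \<in> {-r0..r0} \<longrightarrow> s \<in> {s0..sp} \<longrightarrow>
      det3 (deriv (\<lambda>q'. xpos b m k c q' r s t) q) (deriv (\<lambda>r'. xpos b m k c q r' s t) r)
             (deriv (\<lambda>s'. xpos b m k c q r s' t) s)
           (deriv (\<lambda>q'. ypos d m k c q' r s t) q) (deriv (\<lambda>r'. ypos d m k c q r' s t) r)
             (deriv (\<lambda>s'. ypos d m k c q r s' t) s)
           (deriv (\<lambda>q'. zpos a m k c q' r s t) q) (deriv (\<lambda>r'. zpos a m k c q r' s t) r)
             (deriv (\<lambda>s'. zpos a m k c q r s' t) s)
        = 1 - m^2 * a^2 * exp (- 2 * m * s)
      \<and> 1 - m^2 * a^2 * exp (- 2 * m * s) \<noteq> 0)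
   \<and>
  \<comment> \<open>(ii) velocities and the f-plane Euler equations; the Eulerian pressure gradient
      (Px,Py,Pz) is characterised by the chain rule \<open>\<nabla>_{(q,r,s)} P = J^T (Px,Py,Pz)\<close>\<close>
   (\<forall>q r s t. r \<in> {-r0..r0} \<longrightarrow> s \<in> {s0..sp} \<longrightarrow>
      deriv (\<lambda>t'. xpos b m k c q r s t') t = uvel b m k c q r s t
    \<and> deriv (\<lambda>t'. ypos d m k c q r s t') t = vvel d m k c q r s t
    \<and> deriv (\<lambda>t'. zpos a m k c q r s t') t = wvel a m k c q r s t
    \<and> (\<forall>P0t.
        (\<exists>Px Py Pz.
           deriv (\<lambda>q'. pres P0t rho0 g f fh k c a b d m q' r s t) q
             = deriv (\<lambda>q'. xpos b m k c q' r s t) q * Px + deriv (\<lambda>q'. ypos d m k c q' r s t) q * Py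
               + deriv (\<lambda>q'. zpos a m k c q' r s t) q * Pz
         \<and> deriv (\<lambda>r'. pres P0t rho0 g f fh k c a b d m q r' s t) r
             = deriv (\<lambda>r'. xpos b m k c q r' s t) r * Px + deriv (\<lambda>r'. ypos d m k c q r' s t) r * Py
               + deriv (\<lambda>r'. zpos a m k c q r' s t) r * Pz
         \<and> deriv (\<lambda>s'. pres P0t rho0 g f fh k c a b d m q r s' t) s
             = deriv (\<lambda>s'. xpos b m k c q r s' t) s * Px + deriv (\<lambda>s'. ypos d m k c q r s' t) s * Py
               + deriv (\<lambda>s'. zpos a m k c q r s' t) s * Pz)
      \<and> (\<forall>Px Py Pz.
           deriv (\<lambda>q'. pres P0t rho0 g f fh k c a b d m q' r s t) q
             = deriv (\<lambda>q'. xpos b m k c q' r s t) q * Px + deriv (\<lambda>q'. ypos d m k c q' r s t) q * Py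
               + deriv (\<lambda>q'. zpos a m k c q' r s t) q * Pz
         \<longrightarrow> deriv (\<lambda>r'. pres P0t rho0 g f fh k c a b d m q r' s t) r
             = deriv (\<lambda>r'. xpos b m k c q r' s t) r * Px + deriv (\<lambda>r'. ypos d m k c q r' s t) r * Py
               + deriv (\<lambda>r'. zpos a m k c q r' s t) r * Pz
         \<longrightarrow> deriv (\<lambda>s'. pres P0t rho0 g f fh k c a b d m q r s' t) s
             = deriv (\<lambda>s'. xpos b m k c q r s' t) s * Px + deriv (\<lambda>s'. ypos d m k c q r s' t) s * Py
               + deriv (\<lambda>s'. zpos a m k c q r s' t) s * Pz
         \<longrightarrow> deriv (\<lambda>t'. uvel b m k c q r s t') t + fh * wvel a m k c q r s t - f * vvel d m k c q r s t
               = - (1 / rho0) * Px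
           \<and> deriv (\<lambda>t'. vvel d m k c q r s t') t + f * uvel b m k c q r s t = - (1 / rho0) * Py
           \<and> deriv (\<lambda>t'. wvel a m k c q r s t') t - fh * uvel b m k c q r s t = - (1 / rho0) * Pz - g)))
   \<and>
  \<comment> \<open>(iii) thermocline s = s0 and dispersion relation\<close>
   (rhop * g * a = rho0 * (k * c^2 * b + c * d * f - c * a * fh + a * g) \<longrightarrow>
      (\<forall>P0. \<exists>P0t. \<forall>q r t. r \<in> {-r0..r0} \<longrightarrow>
          pres P0t rho0 g f fh k c a b d m q r s0 t = P0 - rhop * g * zpos a m k c q r s0 t)
    \<and> c^2 * (c^2 * k^2 - f^2) = (c * fh + g * (rhop - rho0) / rho0)^2)"
  proof -
  note I = ids[OF hk hc hkc hm(2) hb hd]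
  have kb: "k*b = m*a" and kcd: "k*c*d + b*f = 0" and bb: "b^2 = a^2 + d^2"
    and key: "m*k*c^2*b + m*c*d*f = k^2*c^2*a" using I by auto
  have E2: "\<And>s. exp (- 2 * m * s) = exp (- m * s)^2"
    by (simp add: power2_eq_square exp_add[symmetric])
  have nz: "\<And>s. s \<in> {s0..sp} \<Longrightarrow> 1 - m^2 * a^2 * exp (- 2 * m * s) \<noteq> 0"
  proof -
    fix s assume "s \<in> {s0..sp}"
    then have "sstar \<le> s" using hs by auto
    then have "exp (- 2 * m * s) \<le> exp (- 2 * m * sstar)" using hm(1) by simp
    then have "m^2 * a^2 * exp (- 2 * m * s) \<le> m^2 * a^2 * exp (- 2 * m * sstar)"
      by (intro mult_left_mono) auto
    then show "1 - m^2 * a^2 * exp (- 2 * m * s) \<noteq> 0" using hs(2) by linarith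
  qed
  have SC: "\<And>x. sin x ^ 2 + cos x ^ 2 = (1::real)" by simp
  show ?thesis
  proof (intro conjI allI impI)
    fix q r s t assume r: "r \<in> {-r0..r0}" and s: "s \<in> {s0..sp}"
    show "det3 (deriv (\<lambda>q'. xpos b m k c q' r s t) q) (deriv (\<lambda>r'. xpos b m k c q r' s t) r)
             (deriv (\<lambda>s'. xpos b m k c q r s' t) s)
           (deriv (\<lambda>q'. ypos d m k c q' r s t) q) (deriv (\<lambda>r'. ypos d m k c q r' s t) r)
             (deriv (\<lambda>s'. ypos d m k c q r s' t) s)
           (deriv (\<lambda>q'. zpos a m k c q' r s t) q) (deriv (\<lambda>r'. zpos a m k c q r' s t) r)
             (deriv (\<lambda>s'. zpos a m k c q r s' t) s)
        = 1 - m^2 * a^2 * exp (- 2 * m * s)"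
      unfolding d_xq d_xr d_xs d_yq d_yr d_ys d_zq d_zr d_zs E2
      by (rule jac[OF kb SC])
    show "1 - m^2 * a^2 * exp (- 2 * m * s) \<noteq> 0" using nz s .
  next
    fix q r s t assume r: "r \<in> {-r0..r0}" and s: "s \<in> {s0..sp}"
    show "deriv (\<lambda>t'. xpos b m k c q r s t') t = uvel b m k c q r s t" by (rule d_xt)
    show "deriv (\<lambda>t'. ypos d m k c q r s t') t = vvel d m k c q r s t" by (rule d_yt)
    show "deriv (\<lambda>t'. zpos a m k c q r s t') t = wvel a m k c q r s t" by (rule d_zt)
    fix P0t
    let ?E = "exp (- m * s)" and ?S = "sin (phase k c q t)" and ?C = "cos (phase k c q t)"
    let ?Rx = "-rho0*(k*c*?E*?S*(k*c*b - fh*a + f*d))"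
    let ?Rz = "-rho0*(k^2*c^2*a*?E*?C - fh*k*c*b*?E*?C + g)"
    have eq1: "deriv (\<lambda>q'. pres P0t rho0 g f fh k c a b d m q' r s t) q
             = deriv (\<lambda>q'. xpos b m k c q' r s t) q * ?Rx + deriv (\<lambda>q'. ypos d m k c q' r s t) q * 0
               + deriv (\<lambda>q'. zpos a m k c q' r s t) q * ?Rz"
      unfolding d_Pq d_xq d_yq d_zq by (rule ex_q[OF kb kcd bb])
    have eq2: "deriv (\<lambda>r'. pres P0t rho0 g f fh k c a b d m q r' s t) r
             = deriv (\<lambda>r'. xpos b m k c q r' s t) r * ?Rx + deriv (\<lambda>r'. ypos d m k c q r' s t) r * 0
               + deriv (\<lambda>r'. zpos a m k c q r' s t) r * ?Rz"
      unfolding d_Pr d_xr d_yr d_zr by simp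
    have eq3: "deriv (\<lambda>s'. pres P0t rho0 g f fh k c a b d m q r s' t) s
             = deriv (\<lambda>s'. xpos b m k c q r s' t) s * ?Rx + deriv (\<lambda>s'. ypos d m k c q r s' t) s * 0
               + deriv (\<lambda>s'. zpos a m k c q r s' t) s * ?Rz"
      unfolding d_Ps d_xs d_ys d_zs E2 by (rule ex_s[OF kb kcd bb key SC])
    show "\<exists>Px Py Pz.
           deriv (\<lambda>q'. pres P0t rho0 g f fh k c a b d m q' r s t) q
             = deriv (\<lambda>q'. xpos b m k c q' r s t) q * Px + deriv (\<lambda>q'. ypos d m k c q' r s t) q * Py
               + deriv (\<lambda>q'. zpos a m k c q' r s t) q * Pz
         \<and> deriv (\<lambda>r'. pres P0t rho0 g f fh k c a b d m q r' s t) r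
             = deriv (\<lambda>r'. xpos b m k c q r' s t) r * Px + deriv (\<lambda>r'. ypos d m k c q r' s t) r * Py
               + deriv (\<lambda>r'. zpos a m k c q r' s t) r * Pz
         \<and> deriv (\<lambda>s'. pres P0t rho0 g f fh k c a b d m q r s' t) s
             = deriv (\<lambda>s'. xpos b m k c q r s' t) s * Px + deriv (\<lambda>s'. ypos d m k c q r s' t) s * Py
               + deriv (\<lambda>s'. zpos a m k c q r s' t) s * Pz"
      using eq1 eq2 eq3 by blast
    fix Px Py Pz
    assume h1: "deriv (\<lambda>q'. pres P0t rho0 g f fh k c a b d m q' r s t) q
             = deriv (\<lambda>q'. xpos b m k c q' r s t) q * Px + deriv (\<lambda>q'. ypos d m k c q' r s t) q * Py
               + deriv (\<lambda>q'. zpos a m k c q' r s t) q * Pz"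
      and h2: "deriv (\<lambda>r'. pres P0t rho0 g f fh k c a b d m q r' s t) r
             = deriv (\<lambda>r'. xpos b m k c q r' s t) r * Px + deriv (\<lambda>r'. ypos d m k c q r' s t) r * Py
               + deriv (\<lambda>r'. zpos a m k c q r' s t) r * Pz"
      and h3: "deriv (\<lambda>s'. pres P0t rho0 g f fh k c a b d m q r s' t) s
             = deriv (\<lambda>s'. xpos b m k c q r s' t) s * Px + deriv (\<lambda>s'. ypos d m k c q r s' t) s * Py
               + deriv (\<lambda>s'. zpos a m k c q r s' t) s * Pz"
    have Py: "Py = 0" using h2 unfolding d_Pr d_xr d_yr d_zr by simp
    define xq where "xq = deriv (\<lambda>q'. xpos b m k c q' r s t) q"
    define zq where "zq = deriv (\<lambda>q'. zpos a m k c q' r s t) q"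
    define xs where "xs = deriv (\<lambda>s'. xpos b m k c q r s' t) s"
    define zs where "zs = deriv (\<lambda>s'. zpos a m k c q r s' t) s"
    have det: "xq*zs - zq*xs \<noteq> 0"
    proof -
      have "xq*zs - zq*xs = 1 - m^2 * a^2 * exp (- 2 * m * s)"
        unfolding xq_def zq_def xs_def zs_def d_xq d_zq d_xs d_zs E2
        using jac[OF kb SC, of "exp (- m * s)" "phase k c q t" d] unfolding det3_def by (simp add: mult.commute)
      then show ?thesis using nz s by simp
    qed
    have l1: "xq*(Px - ?Rx) + zq*(Pz - ?Rz) = 0"
      using h1 eq1 Py unfolding xq_def[symmetric] zq_def[symmetric] by (simp add: algebra_simps)
    have l2: "xs*(Px - ?Rx) + zs*(Pz - ?Rz) = 0"
      using h3 eq3 Py unfolding xs_def[symmetric] zs_def[symmetric] by (simp add: algebra_simps)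
    have "(xq*zs - zq*xs)*(Px - ?Rx) = zs*(xq*(Px - ?Rx) + zq*(Pz - ?Rz)) - zq*(xs*(Px - ?Rx) + zs*(Pz - ?Rz))"
      by (simp add: algebra_simps)
    then have Px: "Px = ?Rx" using l1 l2 det by simp
    have "(xq*zs - zq*xs)*(Pz - ?Rz) = xq*(xs*(Px - ?Rx) + zs*(Pz - ?Rz)) - xs*(xq*(Px - ?Rx) + zq*(Pz - ?Rz))"
      by (simp add: algebra_simps)
    then have Pz: "Pz = ?Rz" using l1 l2 det by simp
      show "deriv (\<lambda>t'. uvel b m k c q r s t') t + fh * wvel a m k c q r s t - f * vvel d m k c q r s t
               = - (1 / rho0) * Px"
        unfolding Px d_ut wvel_def vvel_def using hrho(1) by (simp add: field_simps power2_eq_square)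
      have "k*c*((k*c*d + b*f)*?E*?C) = 0" using kcd by simp
      then have "k*c*(k*c*d*?E*?C + f*b*?E*?C) = 0" by (simp add: algebra_simps)
      then show "deriv (\<lambda>t'. vvel d m k c q r s t') t + f * uvel b m k c q r s t = - (1 / rho0) * Py"
        unfolding Py d_vt uvel_def by (simp add: algebra_simps power2_eq_square)
      show "deriv (\<lambda>t'. wvel a m k c q r s t') t - fh * uvel b m k c q r s t = - (1 / rho0) * Pz - g"
        unfolding Pz d_wt uvel_def using hrho(1) by (simp add: field_simps power2_eq_square)
  next
    assume pc: "rhop * g * a = rho0 * (k * c^2 * b + c * d * f - c * a * fh + a * g)"
      fix P0
      show "\<exists>P0t. \<forall>q r t. r \<in> {-r0..r0} \<longrightarrow>
          pres P0t rho0 g f fh k c a b d m q r s0 t = P0 - rhop * g * zpos a m k c q r s0 t"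
      proof (intro exI allI impI)
        fix q r t
        show "pres (P0 - rhop * g * s0 + rho0 * ( - (1/2) * k^2 * c^2 * b^2 * exp (- 2 * m * s0)
                    + (1/2) * fh * k * c * a * b * exp (- 2 * m * s0)
                    - (1/2) * f * k * c * b * d * exp (- 2 * m * s0) + g * s0)) rho0 g f fh k c a b d m q r s0 t
            = P0 - rhop * g * zpos a m k c q r s0 t"
        proof -
          have "(rhop * g * a) * (exp (- m * s0) * cos (phase k c q t))
             = (rho0 * (k * c^2 * b + c * d * f - c * a * fh + a * g)) * (exp (- m * s0) * cos (phase k c q t))"
            using pc by simp
          then show ?thesis unfolding pres_def zpos_def by (simp add: algebra_simps)
        qed
      qed
    show "c^2 * (c^2 * k^2 - f^2) = (c * fh + g * (rhop - rho0) / rho0)^2"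
    proof -
      have "a * (c * fh + g * (rhop - rho0) / rho0) = k * c^2 * b + c * d * f"
        using pc hrho(1) by (simp add: field_simps)
      then have "k^2*(a * (c * fh + g * (rhop - rho0) / rho0)) = k^2*(k * c^2 * b + c * d * f)" by simp
      also have "... = c^2*k^2*(k*b) + f*(k^2*c*d)" by (simp add: algebra_simps power2_eq_square)
      also have "... = a*(m*(k^2*c^2 - f^2))"
        using kb hd hk hc by (simp add: field_simps power2_eq_square)
      finally have X0: "a*((c * fh + g * (rhop - rho0) / rho0) * k^2) = a*(m*(k^2*c^2 - f^2))"
        by (simp only: mult_ac)
      then have X: "(c * fh + g * (rhop - rho0) / rho0) * k^2 = m*(k^2*c^2 - f^2)"
        using ha by simp
      have D: "k^2*c^2 - f^2 > 0" using hkc by simp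
      have hm2: "m^2 * (k^2*c^2 - f^2) = k^4*c^2" using hm(2) D by (simp add: field_simps)
      have "((c * fh + g * (rhop - rho0) / rho0))^2 * k^4 = (m^2*(k^2*c^2 - f^2))*(k^2*c^2 - f^2)"
        using arg_cong[OF X, of "\<lambda>x. x^2"] by (simp add: power_mult_distrib algebra_simps power2_eq_square power4_eq_xxxx)
      also have "... = c^2*(c^2*k^2 - f^2)*k^4" unfolding hm2 by (simp add: algebra_simps)
      finally show ?thesis using hk by simp
    qed
  qed
qed

end
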